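(* Let $\sigma=(a_1,\ldots,a_s)$ be a partition of $r$ with $a_1\ge a_2\ge\cdots\ge a_s\ge1$ and let $H=H(n,r,q\mid\sigma)$ have classes $V_1,\ldots,V_n$. Let $B\subseteq V(H)$, let $B_i=B\cap V_i$ and $b_i=|B_i|$, where the classes are labelled so that $b_1\ge b_2\ge\cdots\ge b_n$. Let $E^*$ be an edge of $H$ such that for each $1\le i\le s$ the set $A_i=E^*\cap V_i$ has $|A_i|=a_i$, with $A_i\subseteq B_i$ when $a_i<b_i$ and $B_i\subseteq A_i$ when $a_i\ge b_i$. Then \[|E^*\cap B|=\max\{|E\cap B| : E\in E(H)\}.\]
   Context: A $\sigma$-hypergraph $H=H(n,r,q\mid\sigma)$, for a partition $\sigma=(a_1,\ldots,a_s)$ of $r$, is the $r$-uniform hypergraph whose vertex set is the disjoint union of $n$ classes $V_1,\ldots,V_n$, each of size $q$; an $r$-subset $K$ of vertices is an edge iff the multiset of non-zero values $|K\cap V_i|$ ($1\le i\le n$) equals $\sigma$. $E(H)$ denotes the edge set. *)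

theory Defs
  imports Main "HOL-Library.Multiset"
begin

text \<open>Vertices of H(n,r,q|sigma) are pairs (i,j) with class index i in {1..n}
  and position j in {1..q}; class V_i is cls q i.\<close>

definition cls :: "nat \<Rightarrow> nat \<Rightarrow> (nat \<times> nat) set" where
  "cls q i = {i} \<times> {1..q}"

definition verts :: "nat \<Rightarrow> nat \<Rightarrow> (nat \<times> nat) set" where
  "verts n q = (\<Union>i\<in>{1..n}. cls q i)"

definition is_partition :: "nat \<Rightarrow> nat list \<Rightarrow> bool" where
  "is_partition r \<sigma> \<longleftrightarrow> sum_list \<sigma> = r \<and> (\<forall>a\<in>set \<sigma>. 1 \<le> a)"

definition sigma_edges :: "nat \<Rightarrow> nat \<Rightarrow> nat \<Rightarrow> nat list \<Rightarrow> (nat \<times> nat) set set" where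
  "sigma_edges n r q \<sigma> = {K. K \<subseteq> verts n q \<and> card K = r \<and>
     filter_mset (\<lambda>x. x \<noteq> 0) (image_mset (\<lambda>i. card (K \<inter> cls q i)) (mset_set {1..n}))
       = mset \<sigma>}"

end

theory Submission
  imports Defs
begin

lemma count_ge:
  assumes "filter_mset (\<lambda>x. x \<noteq> 0) (image_mset c (mset_set {1..(n::nat)})) = mset (\<sigma>::nat list)"
    and "1 \<le> (t::nat)"
  shows "card {j\<in>{1..n}. t \<le> c j} = size (filter_mset (\<lambda>x. t \<le> x) (mset \<sigma>))"
proof -
  have "filter_mset (\<lambda>x. t \<le> x) (mset \<sigma>)
      = filter_mset (\<lambda>x. t \<le> x) (image_mset c (mset_set {1..n}))"
    unfolding assms(1)[symmetric] filter_filter_mset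
    by (rule filter_mset_cong) (use assms(2) in auto)
  also have "\<dots> = image_mset c (mset_set {j\<in>{1..n}. t \<le> c j})"
    using filter_mset_mset_set[of "{1..n}" "\<lambda>j. t \<le> c j"] by (simp add: filter_mset_image_mset)
  finally show ?thesis by simp
qed

lemma card_ind:
  assumes "finite A"
  shows "(\<Sum>t\<in>A. if P t then (1::nat) else 0) = card {t\<in>A. P t}"
  using sum.inter_filter[OF assms, of "\<lambda>_. (1::nat)" P] by simp

lemma layer:
  assumes "finite J" "\<And>j. j \<in> J \<Longrightarrow> f j \<le> (q::nat)"
  shows "(\<Sum>j\<in>J. min (f j) (g j)) = (\<Sum>t\<in>{1..q}. card {j\<in>J. t \<le> f j \<and> t \<le> g j})"
proof -
  have "min (f j) (g j) = (\<Sum>t\<in>{1..q}. if t \<le> f j \<and> t \<le> g j then 1 else 0)" if "j \<in> J" for j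
  proof -
    have "{t\<in>{1..q}. t \<le> f j \<and> t \<le> g j} = {1..min (f j) (g j)}"
      using assms(2)[OF that] by auto
    then show ?thesis by (subst card_ind) auto
  qed
  then have "(\<Sum>j\<in>J. min (f j) (g j)) = (\<Sum>j\<in>J. \<Sum>t\<in>{1..q}. if t \<le> f j \<and> t \<le> g j then 1 else 0)"
    by simp
  also have "\<dots> = (\<Sum>t\<in>{1..q}. \<Sum>j\<in>J. if t \<le> f j \<and> t \<le> g j then 1 else 0)"
    by (rule sum.swap)
  also have "\<dots> = (\<Sum>t\<in>{1..q}. card {j\<in>J. t \<le> f j \<and> t \<le> g j})"
    using assms(1) by (simp add: card_ind)
  finally show ?thesis .
qed

lemma nested:
  assumes "\<And>i j. i \<in> J \<Longrightarrow> j \<in> S \<Longrightarrow> (i::nat) \<le> j \<Longrightarrow> i \<in> S"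
    and "\<And>i j. i \<in> J \<Longrightarrow> j \<in> T \<Longrightarrow> (i::nat) \<le> j \<Longrightarrow> i \<in> T"
    and "S \<subseteq> J" "T \<subseteq> J"
  shows "S \<subseteq> T \<or> T \<subseteq> S"
proof (rule ccontr)
  assume "\<not> ?thesis"
  then obtain x y where "x \<in> S" "x \<notin> T" "y \<in> T" "y \<notin> S" by auto
  then show False using assms nat_le_linear[of x y] by blast
qed

lemma comb:
  fixes b c d :: "nat \<Rightarrow> nat"
  assumes J: "finite J"
    and cnt: "\<And>t. 1 \<le> t \<Longrightarrow> card {j\<in>J. t \<le> c j} = card {j\<in>J. t \<le> d j}"
    and dd: "\<And>i j. i \<in> J \<Longrightarrow> j \<in> J \<Longrightarrow> i \<le> j \<Longrightarrow> d j \<le> d i"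
    and bd: "\<And>i j. i \<in> J \<Longrightarrow> j \<in> J \<Longrightarrow> i \<le> j \<Longrightarrow> b j \<le> b i"
    and cq: "\<And>j. j \<in> J \<Longrightarrow> c j \<le> q"
    and dq: "\<And>j. j \<in> J \<Longrightarrow> d j \<le> q"
  shows "(\<Sum>j\<in>J. min (c j) (b j)) \<le> (\<Sum>j\<in>J. min (d j) (b j))"
proof -
  have "card {j\<in>J. t \<le> c j \<and> t \<le> b j} \<le> card {j\<in>J. t \<le> d j \<and> t \<le> b j}"
    if t: "t \<in> {1..q}" for t
  proof -
    have fin: "finite {j\<in>J. t \<le> b j}" "finite {j\<in>J. t \<le> c j}" "finite {j\<in>J. t \<le> d j}"
      using J by auto
    have "card {j\<in>J. t \<le> c j \<and> t \<le> b j} \<le> min (card {j\<in>J. t \<le> c j}) (card {j\<in>J. t \<le> b j})"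
      using fin by (auto intro: card_mono)
    also have "\<dots> = min (card {j\<in>J. t \<le> d j}) (card {j\<in>J. t \<le> b j})"
      using cnt t by simp
    also have "\<dots> = card {j\<in>J. t \<le> d j \<and> t \<le> b j}"
    proof -
      have "{j\<in>J. t \<le> d j} \<subseteq> {j\<in>J. t \<le> b j} \<or> {j\<in>J. t \<le> b j} \<subseteq> {j\<in>J. t \<le> d j}"
        by (rule nested[where J=J]) (auto dest: dd bd intro: order_trans)
      then show ?thesis
      proof
        assume h: "{j\<in>J. t \<le> d j} \<subseteq> {j\<in>J. t \<le> b j}"
        then have "{j\<in>J. t \<le> d j \<and> t \<le> b j} = {j\<in>J. t \<le> d j}" by auto
        then show ?thesis using card_mono[OF fin(1) h] by simp
      next
        assume h: "{j\<in>J. t \<le> b j} \<subseteq> {j\<in>J. t \<le> d j}"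
        then have "{j\<in>J. t \<le> d j \<and> t \<le> b j} = {j\<in>J. t \<le> b j}" by auto
        then show ?thesis using card_mono[OF fin(3) h] by simp
      qed
    qed
    finally show ?thesis .
  qed
  then have "(\<Sum>t\<in>{1..q}. card {j\<in>J. t \<le> c j \<and> t \<le> b j}) \<le> (\<Sum>t\<in>{1..q}. card {j\<in>J. t \<le> d j \<and> t \<le> b j})"
    by (rule sum_mono)
  then show ?thesis
    using layer[of J c q b, OF J cq] layer[of J d q b, OF J dq] by simp
qed

lemma cls_fin: "finite (cls q i)" and cls_card: "card (cls q i) = q"
  by (auto simp: cls_def card_cartesian_product)

lemma cls_disj: "i \<noteq> j \<Longrightarrow> cls q i \<inter> cls q j = {}"
  by (auto simp: cls_def)

lemma verts_fin: "finite (verts n q)"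
  by (auto simp: verts_def cls_fin)

lemma card_split:
  assumes "K \<subseteq> verts n q"
  shows "card (K \<inter> B) = (\<Sum>j\<in>{1..n}. card (K \<inter> B \<inter> cls q j))"
proof -
  have "K \<inter> B = (\<Union>j\<in>{1..n}. K \<inter> B \<inter> cls q j)"
    using assms by (auto simp: verts_def)
  moreover have "card (\<Union>j\<in>{1..n}. K \<inter> B \<inter> cls q j) = (\<Sum>j\<in>{1..n}. card (K \<inter> B \<inter> cls q j))"
    by (rule card_UN_disjoint) (auto simp: cls_fin dest: cls_disj)
  ultimately show ?thesis by simp
qed

lemma edge_le:
  assumes "E \<in> sigma_edges n r q \<sigma>"
  shows "card (E \<inter> B) \<le> (\<Sum>j\<in>{1..n}. min (card (E \<inter> cls q j)) (card (B \<inter> cls q j)))"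
proof -
  have sub: "E \<subseteq> verts n q" using assms by (simp add: sigma_edges_def)
  have "card (E \<inter> B \<inter> cls q j) \<le> min (card (E \<inter> cls q j)) (card (B \<inter> cls q j))" for j
    by (auto intro!: card_mono simp: cls_fin)
  then show ?thesis unfolding card_split[OF sub] by (rule sum_mono)
qed

theorem lemma2p4:
  fixes n r q :: nat and \<sigma> :: "nat list" and B Estar :: "(nat \<times> nat) set"
  assumes part: "is_partition r \<sigma>"
    and sorted_parts: "\<forall>i j. i \<le> j \<longrightarrow> j < length \<sigma> \<longrightarrow> \<sigma> ! j \<le> \<sigma> ! i"
    and B_sub: "B \<subseteq> verts n q"
    and b_sorted: "\<forall>i j. 1 \<le> i \<longrightarrow> i \<le> j \<longrightarrow> j \<le> n \<longrightarrow>
                      card (B \<inter> cls q j) \<le> card (B \<inter> cls q i)"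
    and edge: "Estar \<in> sigma_edges n r q \<sigma>"
    and A_prop: "\<forall>i\<in>{1..length \<sigma>}.
        card (Estar \<inter> cls q i) = \<sigma> ! (i - 1) \<and>
        (\<sigma> ! (i - 1) < card (B \<inter> cls q i) \<longrightarrow> Estar \<inter> cls q i \<subseteq> B \<inter> cls q i) \<and>
        (card (B \<inter> cls q i) \<le> \<sigma> ! (i - 1) \<longrightarrow> B \<inter> cls q i \<subseteq> Estar \<inter> cls q i)"
  shows "card (Estar \<inter> B) = Max ((\<lambda>E. card (E \<inter> B)) ` sigma_edges n r q \<sigma>)"
proof -
  define b where "b j = card (B \<inter> cls q j)" for j
  define cs where "cs j = card (Estar \<inter> cls q j)" for j
  define s where "s = length \<sigma>"
  have Esub: "Estar \<subseteq> verts n q" and Emul: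
    "filter_mset (\<lambda>x. x \<noteq> 0) (image_mset cs (mset_set {1..n})) = mset \<sigma>"
    using edge by (simp_all add: sigma_edges_def cs_def[abs_def])
  have pos: "\<And>a. a \<in> set \<sigma> \<Longrightarrow> 1 \<le> a" using part by (simp add: is_partition_def)
  have csj: "cs j = \<sigma> ! (j - 1)" if "1 \<le> j" "j \<le> s" for j
    using A_prop that by (simp add: cs_def s_def)
  have sn: "s \<le> n"
  proof (rule ccontr)
    assume "\<not> s \<le> n"
    then have "Estar \<inter> cls q s = {}" using Esub by (auto simp: verts_def cls_def)
    moreover have "1 \<le> \<sigma> ! (s - 1)" using pos \<open>\<not> s \<le> n\<close> by (simp add: s_def)
    ultimately show False using csj[of s] \<open>\<not> s \<le> n\<close> by (simp add: cs_def)
  qed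
  have cs0: "cs j = 0" if "s < j" "j \<le> n" for j
  proof -
    have "card {j\<in>{1..n}. 1 \<le> cs j} = size (filter_mset (\<lambda>x. 1 \<le> x) (mset \<sigma>))"
      by (rule count_ge[OF Emul]) simp
    also have "filter_mset (\<lambda>x. 1 \<le> x) (mset \<sigma>) = mset \<sigma>"
      using pos by (simp add: filter_mset_eq_conv)
    finally have c1: "card {j\<in>{1..n}. 1 \<le> cs j} = s" by (simp add: s_def)
    have sub1: "{1..s} \<subseteq> {j\<in>{1..n}. 1 \<le> cs j}"
    proof
      fix j assume "j \<in> {1..s}"
      then have "1 \<le> j" "j \<le> s" by auto
      then have "\<sigma> ! (j - 1) \<in> set \<sigma>" by (simp add: s_def)
      then show "j \<in> {j\<in>{1..n}. 1 \<le> cs j}" using csj[OF \<open>1 \<le> j\<close> \<open>j \<le> s\<close>] pos \<open>1 \<le> j\<close> \<open>j \<le> s\<close> sn by auto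
    qed
    have eq: "{1..s} = {j\<in>{1..n}. 1 \<le> cs j}"
      by (rule card_subset_eq) (use sub1 c1 in auto)
    have "j \<notin> {1..s}" using that by auto
    then have "j \<notin> {j\<in>{1..n}. 1 \<le> cs j}" unfolding eq .
    then show ?thesis using that by auto
  qed
  have cs_dec: "cs j \<le> cs i" if "i \<in> {1..n}" "j \<in> {1..n}" "i \<le> j" for i j
  proof (cases "j \<le> s")
    case True
    then show ?thesis using csj[of i] csj[of j] that sorted_parts by (simp add: s_def)
  next
    case False
    then show ?thesis using cs0[of j] that by simp
  qed
  have Estar_val: "card (Estar \<inter> B) = (\<Sum>j\<in>{1..n}. min (cs j) (b j))"
    unfolding card_split[OF Esub]
  proof (rule sum.cong[OF refl])
    fix j assume j: "j \<in> {1..n}"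
    show "card (Estar \<inter> B \<inter> cls q j) = min (cs j) (b j)"
    proof (cases "j \<le> s")
      case True
      then have h: "j \<in> {1..length \<sigma>}" using j by (simp add: s_def)
      have e: "cs j = \<sigma> ! (j - 1)" using A_prop h by (simp add: cs_def)
      show ?thesis
      proof (cases "\<sigma> ! (j - 1) < b j")
        case True
        then have "Estar \<inter> cls q j \<subseteq> B \<inter> cls q j" using A_prop h by (simp add: b_def)
        then have "Estar \<inter> B \<inter> cls q j = Estar \<inter> cls q j" by auto
        then show ?thesis using True e by (simp add: cs_def)
      next
        case False
        then have "B \<inter> cls q j \<subseteq> Estar \<inter> cls q j" using A_prop h by (simp add: b_def)
        then have "Estar \<inter> B \<inter> cls q j = B \<inter> cls q j" by auto
        then show ?thesis using False e by (simp add: b_def)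
      qed
    next
      case False
      then have "cs j = 0" using cs0 j by simp
      then have "Estar \<inter> cls q j = {}" by (simp add: cs_def cls_fin)
      then have "Estar \<inter> B \<inter> cls q j = {}" by auto
      then show ?thesis using \<open>cs j = 0\<close> by simp
    qed
  qed
  have bound: "card (E \<inter> B) \<le> card (Estar \<inter> B)" if E: "E \<in> sigma_edges n r q \<sigma>" for E
  proof -
    define c where "c j = card (E \<inter> cls q j)" for j
    have Emul': "filter_mset (\<lambda>x. x \<noteq> 0) (image_mset c (mset_set {1..n})) = mset \<sigma>"
      using E by (simp add: sigma_edges_def c_def[abs_def])
    have "card (E \<inter> B) \<le> (\<Sum>j\<in>{1..n}. min (c j) (b j))"
      using edge_le[OF E, of B] by (simp add: c_def b_def)
    also have "\<dots> \<le> (\<Sum>j\<in>{1..n}. min (cs j) (b j))"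
    proof (rule comb[where q=q])
      fix t :: nat assume "1 \<le> t"
      show "card {j\<in>{1..n}. t \<le> c j} = card {j\<in>{1..n}. t \<le> cs j}"
        using count_ge[OF Emul' \<open>1 \<le> t\<close>] count_ge[OF Emul \<open>1 \<le> t\<close>] by simp
    next
      fix i j assume "i \<in> {1..n}" "j \<in> {1..n}" "i \<le> j"
      then show "cs j \<le> cs i" by (rule cs_dec)
    next
      fix i j assume "i \<in> {1..n}" "j \<in> {1..n}" "i \<le> j"
      then show "b j \<le> b i" using b_sorted by (simp add: b_def)
    next
      fix j show "c j \<le> q" unfolding c_def
        by (metis card_mono cls_card cls_fin inf_le2)
    next
      fix j show "cs j \<le> q" unfolding cs_def
        by (metis card_mono cls_card cls_fin inf_le2)
    qed simp
    finally show ?thesis using Estar_val by simp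
  qed
  have fin: "finite (sigma_edges n r q \<sigma>)"
    by (rule finite_subset[of _ "Pow (verts n q)"]) (auto simp: sigma_edges_def verts_fin)
  show ?thesis
    by (rule sym, rule Max_eqI) (use fin bound edge in auto)
qed

end
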